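(* Let $\mathcal{H}$ be a Hilbert space with inner product $[\cdot,\cdot]$, $K(\mathcal{H})$ the $C^*$-algebra of compact operators on $\mathcal{H}$, and $\mathcal{E}$ a Hilbert $K(\mathcal{H})$-module. Let $x, y\in\mathcal{E}$ and suppose $\langle x,x\rangle$ is a minimal projection. Then $x\parallel y$ if and only if there exists a unit vector $\xi\in\mathcal{H}$ such that $$\big|[\langle x,y\rangle\xi,\xi]\big| = \|y\|.$$
   Context: A (left) Hilbert $K(\mathcal{H})$-module is a left $K(\mathcal{H})$-module $\mathcal{E}$ with a $K(\mathcal{H})$-valued inner product $\langle\cdot,\cdot\rangle$, linear in the first variable and conjugate linear in the second, satisfying $\langle x,x\rangle\ge 0$ with equality iff $x=0$, $\langle ax,y\rangle = a\langle x,y\rangle$ and $\langle x,y\rangle^*=\langle y,x\rangle$, and complete for the norm $\|x\|=\|\langle x,x\rangle\|^{1/2}$. A projection $P\in B(\mathcal{H})$ is minimal if $PB(\mathcal{H})P=\mathbb{C}P$; equivalently $P=\xi\otimes\xi$ for a unit vector $\xi$, where $(\xi\otimes\eta)(\zeta)=[\zeta,\eta]\xi$. $x\parallel y$ (norm-parallel) means $\|x+\lambda y\|=\|x\|+\|y\|$ for some $\lambda\in\mathbb{C}$ with $|\lambda|=1$. *)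

theory Defs
  imports Complex_Main
begin

text \<open>A complex Hilbert space is a type 'h (an additive abelian group) together with a
complex scalar multiplication sm and a complex inner product ip (linear in the first,
conjugate linear in the second variable), complete w.r.t. the induced norm.\<close>

definition hnorm :: "('h \<Rightarrow> 'h \<Rightarrow> complex) \<Rightarrow> 'h \<Rightarrow> real" where
  "hnorm ip x = sqrt (Re (ip x x))"

definition hilbert_space :: "(complex \<Rightarrow> 'h::ab_group_add \<Rightarrow> 'h) \<Rightarrow> ('h \<Rightarrow> 'h \<Rightarrow> complex) \<Rightarrow> bool" where
  "hilbert_space sm ip \<longleftrightarrow>
     (\<forall>a b x. sm a (sm b x) = sm (a * b) x) \<and> (\<forall>x. sm 1 x = x) \<and>
     (\<forall>a x y. sm a (x + y) = sm a x + sm a y) \<and> (\<forall>a b x. sm (a + b) x = sm a x + sm b x) \<and>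
     (\<forall>x y z. ip (x + y) z = ip x z + ip y z) \<and> (\<forall>a x y. ip (sm a x) y = a * ip x y) \<and>
     (\<forall>x y. ip y x = cnj (ip x y)) \<and>
     (\<forall>x. Im (ip x x) = 0 \<and> 0 \<le> Re (ip x x)) \<and> (\<forall>x. ip x x = 0 \<longleftrightarrow> x = 0) \<and>
     (\<forall>X :: nat \<Rightarrow> 'h. (\<forall>e>0. \<exists>N. \<forall>m\<ge>N. \<forall>n\<ge>N. hnorm ip (X m - X n) < e) \<longrightarrow>
        (\<exists>L. \<forall>e>0. \<exists>N. \<forall>n\<ge>N. hnorm ip (X n - L) < e))"

definition bounded_op :: "(complex \<Rightarrow> 'h::ab_group_add \<Rightarrow> 'h) \<Rightarrow> ('h \<Rightarrow> 'h \<Rightarrow> complex) \<Rightarrow> ('h \<Rightarrow> 'h) \<Rightarrow> bool" where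
  "bounded_op sm ip T \<longleftrightarrow>
     (\<forall>x y. T (x + y) = T x + T y) \<and> (\<forall>a x. T (sm a x) = sm a (T x)) \<and>
     (\<exists>C. \<forall>x. hnorm ip (T x) \<le> C * hnorm ip x)"

definition op_norm :: "('h \<Rightarrow> 'h \<Rightarrow> complex) \<Rightarrow> ('h \<Rightarrow> 'h) \<Rightarrow> real" where
  "op_norm ip T = Sup {hnorm ip (T x) | x. hnorm ip x \<le> 1}"

definition hconverges :: "('h::ab_group_add \<Rightarrow> 'h \<Rightarrow> complex) \<Rightarrow> (nat \<Rightarrow> 'h) \<Rightarrow> bool" where
  "hconverges ip X \<longleftrightarrow> (\<exists>L. \<forall>e>0. \<exists>N. \<forall>n\<ge>N. hnorm ip (X n - L) < e)"

text \<open>Compact operator: bounded, and maps bounded sequences to sequences having a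
convergent subsequence (equivalently: the image of the unit ball is relatively compact).\<close>

definition compact_op :: "(complex \<Rightarrow> 'h::ab_group_add \<Rightarrow> 'h) \<Rightarrow> ('h \<Rightarrow> 'h \<Rightarrow> complex) \<Rightarrow> ('h \<Rightarrow> 'h) \<Rightarrow> bool" where
  "compact_op sm ip T \<longleftrightarrow> bounded_op sm ip T \<and>
     (\<forall>X :: nat \<Rightarrow> 'h. (\<exists>B. \<forall>n. hnorm ip (X n) \<le> B) \<longrightarrow>
        (\<exists>r. strict_mono r \<and> hconverges ip (\<lambda>n. T (X (r n)))))"

definition minimal_projection :: "(complex \<Rightarrow> 'h::ab_group_add \<Rightarrow> 'h) \<Rightarrow> ('h \<Rightarrow> 'h \<Rightarrow> complex) \<Rightarrow> ('h \<Rightarrow> 'h) \<Rightarrow> bool" where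
  "minimal_projection sm ip P \<longleftrightarrow> bounded_op sm ip P \<and> P \<circ> P = P \<and>
     (\<forall>x y. ip (P x) y = ip x (P y)) \<and> (\<exists>x. P x \<noteq> 0) \<and>
     (\<forall>T. bounded_op sm ip T \<longrightarrow> (\<exists>c. P \<circ> T \<circ> P = (\<lambda>x. sm c (P x))))"

text \<open>esm: complex scalar multiplication on E; act: left action of K(H) on E;
ein: the K(H)-valued inner product.  The module norm is ||x|| = ||<x,x>||^(1/2).\<close>

definition enorm :: "('h \<Rightarrow> 'h \<Rightarrow> complex) \<Rightarrow> ('e \<Rightarrow> 'e \<Rightarrow> 'h \<Rightarrow> 'h) \<Rightarrow> 'e \<Rightarrow> real" where
  "enorm ip ein x = sqrt (op_norm ip (ein x x))"

definition hilbert_K_module ::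
  "(complex \<Rightarrow> 'h::ab_group_add \<Rightarrow> 'h) \<Rightarrow> ('h \<Rightarrow> 'h \<Rightarrow> complex) \<Rightarrow>
   (complex \<Rightarrow> 'e::ab_group_add \<Rightarrow> 'e) \<Rightarrow> (('h \<Rightarrow> 'h) \<Rightarrow> 'e \<Rightarrow> 'e) \<Rightarrow> ('e \<Rightarrow> 'e \<Rightarrow> 'h \<Rightarrow> 'h) \<Rightarrow> bool" where
  "hilbert_K_module sm ip esm act ein \<longleftrightarrow>
     hilbert_space sm ip \<and>
     \<comment> \<open>E is a complex vector space\<close>
     (\<forall>a b x. esm a (esm b x) = esm (a * b) x) \<and> (\<forall>x. esm 1 x = x) \<and>
     (\<forall>a x y. esm a (x + y) = esm a x + esm a y) \<and> (\<forall>a b x. esm (a + b) x = esm a x + esm b x) \<and>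
     \<comment> \<open>E is a left K(H)-module (compatible with the complex structure)\<close>
     (\<forall>a b x. compact_op sm ip a \<longrightarrow> compact_op sm ip b \<longrightarrow> act (a \<circ> b) x = act a (act b x)) \<and>
     (\<forall>a b x. compact_op sm ip a \<longrightarrow> compact_op sm ip b \<longrightarrow> act (\<lambda>\<xi>. a \<xi> + b \<xi>) x = act a x + act b x) \<and>
     (\<forall>a x y. compact_op sm ip a \<longrightarrow> act a (x + y) = act a x + act a y) \<and>
     (\<forall>a c x. compact_op sm ip a \<longrightarrow> act (\<lambda>\<xi>. sm c (a \<xi>)) x = esm c (act a x)) \<and>
     (\<forall>a c x. compact_op sm ip a \<longrightarrow> act a (esm c x) = esm c (act a x)) \<and>
     \<comment> \<open>K(H)-valued inner product\<close>
     (\<forall>x y. compact_op sm ip (ein x y)) \<and>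
     (\<forall>x y z. ein (x + y) z = (\<lambda>\<xi>. ein x z \<xi> + ein y z \<xi>)) \<and>
     (\<forall>c x y. ein (esm c x) y = (\<lambda>\<xi>. sm c (ein x y \<xi>))) \<and>
     (\<forall>a x y. compact_op sm ip a \<longrightarrow> ein (act a x) y = a \<circ> ein x y) \<and>
     (\<forall>x y \<xi> \<eta>. ip (ein x y \<xi>) \<eta> = ip \<xi> (ein y x \<eta>)) \<comment> \<open><x,y>* = <y,x>\<close> \<and>
     (\<forall>x \<xi>. Im (ip (ein x x \<xi>) \<xi>) = 0 \<and> 0 \<le> Re (ip (ein x x \<xi>) \<xi>)) \<comment> \<open><x,x> \<ge> 0\<close> \<and>
     (\<forall>x. ein x x = (\<lambda>_. 0) \<longleftrightarrow> x = 0) \<and>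
     \<comment> \<open>completeness w.r.t. the module norm\<close>
     (\<forall>X :: nat \<Rightarrow> 'e. (\<forall>e>0. \<exists>N. \<forall>m\<ge>N. \<forall>n\<ge>N. enorm ip ein (X m - X n) < e) \<longrightarrow>
        (\<exists>L. \<forall>e>0. \<exists>N. \<forall>n\<ge>N. enorm ip ein (X n - L) < e))"

definition norm_parallel ::
  "('h \<Rightarrow> 'h \<Rightarrow> complex) \<Rightarrow> (complex \<Rightarrow> 'e::ab_group_add \<Rightarrow> 'e) \<Rightarrow> ('e \<Rightarrow> 'e \<Rightarrow> 'h \<Rightarrow> 'h) \<Rightarrow> 'e \<Rightarrow> 'e \<Rightarrow> bool" where
  "norm_parallel ip esm ein x y \<longleftrightarrow>
     (\<exists>l::complex. cmod l = 1 \<and> enorm ip ein (x + esm l y) = enorm ip ein x + enorm ip ein y)"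

end

theory Submission
  imports Defs
begin

locale sesq =
  fixes f :: "complex \<Rightarrow> 'v::ab_group_add \<Rightarrow> 'v" and B :: "'v \<Rightarrow> 'v \<Rightarrow> complex"
  assumes add1: "B (u + v) w = B u w + B v w"
    and smul1: "B (f c u) w = c * B u w"
    and herm: "B v u = cnj (B u v)"
    and pos_im: "Im (B u u) = 0" and pos_re: "0 \<le> Re (B u u)"
begin

lemma add2: "B u (v + w) = B u v + B u w"
  by (metis add1 herm complex_cnj_add)

lemma smul2: "B u (f c v) = cnj c * B u v"
  by (metis smul1 herm complex_cnj_mult)

lemma zero1: "B 0 w = 0"
  using add1[of 0 0 w] by simp

lemma diag_real: "B u u = complex_of_real (Re (B u u))"
  using pos_im[of u] by (simp add: complex_eq_iff)

lemma expand: "B (u + f t v) (u + f t v) = B u u + cnj t * B u v + t * cnj (B u v) + t * cnj t * B v v"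
  by (simp add: add1 add2 smul1 smul2 herm[of u v] algebra_simps)

lemma expand_re: "Re (B (u + f t v) (u + f t v)) = Re (B u u) + 2 * Re (cnj t * B u v) + (cmod t)^2 * Re (B v v)"
  using pos_im[of v] cmod_power2[of t] by (simp add: expand algebra_simps power2_eq_square)

lemma cs: "(cmod (B u v))^2 \<le> Re (B u u) * Re (B v v)"
proof -
  define \<beta> where "\<beta> = B u v"
  define p where "p = Re (B v v)"
  have p0: "p \<ge> 0" using pos_re p_def by simp
  show ?thesis
  proof (cases "p > 0")
    case True
    define t where "t = - \<beta> / complex_of_real p"
    have "0 \<le> Re (B (u + f t v) (u + f t v))" by (rule pos_re)
    also have "\<dots> = Re (B u u) + 2 * Re (cnj t * \<beta>) + (cmod t)^2 * p"
      by (simp add: expand_re \<beta>_def p_def)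
    also have "cnj t * \<beta> = - complex_of_real ((cmod \<beta>)^2 / p)"
      by (simp add: t_def complex_norm_square[symmetric] mult.commute)
    also have "(cmod t)^2 = (cmod \<beta>)^2 / p^2"
      using True by (simp add: t_def norm_divide power_divide)
    finally have "0 \<le> Re (B u u) - (cmod \<beta>)^2 / p"
      using True by (simp add: power2_eq_square field_simps)
    then have "(cmod \<beta>)^2 / p \<le> Re (B u u)" by simp
    then show ?thesis using True by (simp add: \<beta>_def p_def field_simps)
  next
    case False
    then have p00: "p = 0" using p0 by simp
    have "\<beta> = 0"
    proof (rule ccontr)
      assume nz: "\<beta> \<noteq> 0"
      define r where "r = (Re (B u u) + 1) / (cmod \<beta>)^2"
      define t where "t = - complex_of_real r * \<beta>"
      have "0 \<le> Re (B (u + f t v) (u + f t v))" by (rule pos_re)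
      also have "\<dots> = Re (B u u) + 2 * Re (cnj t * \<beta>)"
        by (simp add: expand_re \<beta>_def p00[unfolded p_def])
      also have "cnj t * \<beta> = - complex_of_real (r * (cmod \<beta>)^2)"
        by (simp add: t_def complex_norm_square[symmetric] mult.commute)
      also have "r * (cmod \<beta>)^2 = Re (B u u) + 1"
        using nz by (simp add: r_def)
      finally show False using pos_re[of u] by simp
    qed
    then show ?thesis using pos_re[of u] p0 by (simp add: \<beta>_def p_def)
  qed
qed

lemma diff1: "B (u - v) w = B u w - B v w"
  using add1[of "u - v" v w] by simp

end

locale hs =
  fixes sm :: "complex \<Rightarrow> 'h::ab_group_add \<Rightarrow> 'h" and ip :: "'h \<Rightarrow> 'h \<Rightarrow> complex"
  assumes hs: "hilbert_space sm ip"

sublocale hs \<subseteq> H: sesq sm ip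
proof
  fix u v w :: 'h and c :: complex
  show "ip (u + v) w = ip u w + ip v w" using hs unfolding hilbert_space_def by blast
  show "ip (sm c u) w = c * ip u w" using hs unfolding hilbert_space_def by blast
  show "ip v u = cnj (ip u v)" using hs unfolding hilbert_space_def by blast
  show "Im (ip u u) = 0" using hs unfolding hilbert_space_def by blast
  show "0 \<le> Re (ip u u)" using hs unfolding hilbert_space_def by blast
qed

context hs
begin

lemmas hsd = hs[unfolded hilbert_space_def]
lemma sm_assoc: "sm a (sm b x) = sm (a * b) x" using hsd[THEN conjunct1] by blast
lemma sm_one: "sm 1 x = x" using hsd[THEN conjunct2, THEN conjunct1] by blast
lemma sm_add: "sm a (x + y) = sm a x + sm a y" using hsd[THEN conjunct2, THEN conjunct2, THEN conjunct1] by blast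
lemma sm_add2: "sm (a + b) x = sm a x + sm b x" using hsd[THEN conjunct2, THEN conjunct2, THEN conjunct2, THEN conjunct1] by blast
lemma ip_zero_iff: "ip x x = 0 \<longleftrightarrow> x = 0"
  using hsd[THEN conjunct2, THEN conjunct2, THEN conjunct2, THEN conjunct2, THEN conjunct2, THEN conjunct2, THEN conjunct2, THEN conjunct2, THEN conjunct1] by blast

lemma sm_zero: "sm 0 x = 0"
  using sm_add2[of 0 0 x] by simp

lemma sm_neg_cancel: "sm (- c) x + sm c x = 0"
  using sm_add2[of "-c" c x] by (simp add: sm_zero)

lemma hnorm_nonneg: "hnorm ip x \<ge> 0"
  by (simp add: hnorm_def H.pos_re)

lemma hnorm_sq: "(hnorm ip x)^2 = Re (ip x x)"
  using H.pos_re[of x] by (simp add: hnorm_def)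

lemma ip_self: "ip x x = complex_of_real ((hnorm ip x)^2)"
  using H.diag_real hnorm_sq by simp

lemma hnorm_zero: "hnorm ip x = 0 \<longleftrightarrow> x = 0"
  by (metis ip_self ip_zero_iff of_real_eq_0_iff power_zero_numeral zero_power2 power_eq_0_iff)

lemma hnorm_0: "hnorm ip 0 = 0" by (simp add: hnorm_zero)

lemma hnorm_sm: "hnorm ip (sm a x) = cmod a * hnorm ip x"
proof -
  have "(hnorm ip (sm a x))^2 = Re (a * cnj a * ip x x)"
    using H.pos_im[of x] by (simp add: hnorm_sq H.smul1 H.smul2 algebra_simps)
  also have "\<dots> = ((Re a)^2 + (Im a)^2) * Re (ip x x)"
    using H.pos_im[of x] by (simp add: algebra_simps power2_eq_square)
  also have "\<dots> = (cmod a * hnorm ip x)^2"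
    by (simp only: power_mult_distrib cmod_power2 hnorm_sq)
  finally show ?thesis
    using hnorm_nonneg by (simp add: power2_eq_iff_nonneg)
qed

lemma ip_cs: "cmod (ip x y) \<le> hnorm ip x * hnorm ip y"
proof -
  have "(cmod (ip x y))^2 \<le> (hnorm ip x * hnorm ip y)^2"
    using H.cs[of x y] by (simp add: hnorm_sq power_mult_distrib)
  then show ?thesis
    using hnorm_nonneg by (meson mult_nonneg_nonneg power2_le_imp_le)
qed

lemma ip_ext: assumes "\<And>\<eta>. ip u \<eta> = ip v \<eta>" shows "u = v"
proof -
  have "ip (u - v) (u - v) = 0" using assms by (simp add: H.diff1)
  then show ?thesis using ip_zero_iff by simp
qed

lemma bop_add: "bounded_op sm ip A \<Longrightarrow> A (x + y) = A x + A y"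
  unfolding bounded_op_def by auto
lemma bop_sm: "bounded_op sm ip A \<Longrightarrow> A (sm a x) = sm a (A x)"
  unfolding bounded_op_def by auto
lemma bop_zero: "bounded_op sm ip A \<Longrightarrow> A 0 = 0"
  using bop_add[of A 0 0] by simp

lemma op_bdd: assumes "bounded_op sm ip A"
  shows "bdd_above {hnorm ip (A x) | x. hnorm ip x \<le> 1}"
proof -
  obtain C where C: "\<And>x. hnorm ip (A x) \<le> C * hnorm ip x"
    using assms unfolding bounded_op_def by auto
  have "hnorm ip (A x) \<le> \<bar>C\<bar>" if "hnorm ip x \<le> 1" for x
  proof -
    have "C * hnorm ip x \<le> \<bar>C\<bar> * hnorm ip x" using hnorm_nonneg
      by (simp add: mult_right_mono)
    also have "\<dots> \<le> \<bar>C\<bar>" using that hnorm_nonneg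
      by (simp add: mult_left_le)
    finally show ?thesis using C[of x] by linarith
  qed
  then show ?thesis unfolding bdd_above_def by blast
qed

lemma op_le: assumes "bounded_op sm ip A" "hnorm ip x \<le> 1"
  shows "hnorm ip (A x) \<le> op_norm ip A"
  unfolding op_norm_def using assms op_bdd by (intro cSup_upper) auto

lemma op_nonneg: assumes "bounded_op sm ip A" shows "0 \<le> op_norm ip A"
  using op_le[OF assms, of 0] bop_zero[OF assms] by (simp add: hnorm_0)

lemma op_least: assumes "\<And>x. hnorm ip x \<le> 1 \<Longrightarrow> hnorm ip (A x) \<le> M"
  shows "op_norm ip A \<le> M"
  unfolding op_norm_def using assms
  by (intro cSup_least) (auto intro: exI[of _ 0] simp: hnorm_0)

lemma op_bound: assumes "bounded_op sm ip A"
  shows "hnorm ip (A x) \<le> op_norm ip A * hnorm ip x"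
proof (cases "x = 0")
  case True then show ?thesis using bop_zero[OF assms] by (simp add: hnorm_0)
next
  case False
  define h where "h = hnorm ip x"
  have h0: "h > 0" using False hnorm_zero hnorm_nonneg h_def
    by (metis less_eq_real_def)
  have "hnorm ip (sm (complex_of_real (1/h)) x) = 1"
    using h0 by (simp add: hnorm_sm h_def norm_divide)
  then have "hnorm ip (A (sm (complex_of_real (1/h)) x)) \<le> op_norm ip A"
    using op_le[OF assms] by simp
  then have "hnorm ip (A x) / h \<le> op_norm ip A"
    using h0 by (simp add: bop_sm[OF assms] hnorm_sm norm_divide)
  then show ?thesis using h0 by (simp add: h_def field_simps)
qed

lemma op_quad: assumes "bounded_op sm ip A" "hnorm ip x \<le> 1"
  shows "Re (ip (A x) x) \<le> op_norm ip A"
proof -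
  have "Re (ip (A x) x) \<le> cmod (ip (A x) x)" by (rule complex_Re_le_cmod)
  also have "\<dots> \<le> hnorm ip (A x) * hnorm ip x" by (rule ip_cs)
  also have "\<dots> \<le> op_norm ip A * hnorm ip x * hnorm ip x"
    using op_bound[OF assms(1)] hnorm_nonneg by (simp add: mult_right_mono)
  also have "\<dots> \<le> op_norm ip A"
    using assms(2) hnorm_nonneg op_nonneg[OF assms(1)]
    by (metis mult.assoc mult_left_le mult_le_one)
  finally show ?thesis .
qed

lemma pos_sesq: assumes "bounded_op sm ip A" "\<And>x y. ip (A x) y = ip x (A y)"
    "\<And>x. Im (ip (A x) x) = 0" "\<And>x. 0 \<le> Re (ip (A x) x)"
  shows "sesq sm (\<lambda>u v. ip (A u) v)"
proof
  fix u v w :: 'h and c :: complex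
  show "ip (A (u + v)) w = ip (A u) w + ip (A v) w" by (simp add: bop_add[OF assms(1)] H.add1)
  show "ip (A (sm c u)) w = c * ip (A u) w" by (simp add: bop_sm[OF assms(1)] H.smul1)
  show "ip (A v) u = cnj (ip (A u) v)" by (metis assms(2) H.herm)
  show "Im (ip (A u) u) = 0" by (rule assms(3))
  show "0 \<le> Re (ip (A u) u)" by (rule assms(4))
qed

lemma pos_zero: assumes A: "bounded_op sm ip A" "\<And>x y. ip (A x) y = ip x (A y)"
    "\<And>x. Im (ip (A x) x) = 0" "\<And>x. 0 \<le> Re (ip (A x) x)"
  and Z: "\<And>\<zeta>. Re (ip (A \<zeta>) \<zeta>) = 0"
  shows "A z = 0"
proof -
  interpret P: sesq sm "\<lambda>u v. ip (A u) v" by (rule pos_sesq[OF A])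
  have "ip (A z) \<eta> = ip 0 \<eta>" for \<eta>
  proof -
    have "(cmod (ip (A z) \<eta>))^2 \<le> 0" using P.cs[of z \<eta>] Z[of z] by simp
    then show ?thesis by (simp add: H.zero1)
  qed
  then show ?thesis by (rule ip_ext)
qed

lemma op_norm_quad: assumes A: "bounded_op sm ip A" "\<And>x y. ip (A x) y = ip x (A y)"
    "\<And>x. Im (ip (A x) x) = 0" "\<And>x. 0 \<le> Re (ip (A x) x)"
  and M: "\<And>\<zeta>. hnorm ip \<zeta> \<le> 1 \<Longrightarrow> Re (ip (A \<zeta>) \<zeta>) \<le> M"
  shows "op_norm ip A \<le> M"
proof -
  interpret P: sesq sm "\<lambda>u v. ip (A u) v" by (rule pos_sesq[OF A])
  have M0: "0 \<le> M" using M[of 0] by (simp add: hnorm_0 bop_zero[OF A(1)] H.zero1)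
  define N where "N = op_norm ip A"
  have N0: "0 \<le> N" using op_nonneg[OF A(1)] N_def by simp
  have key: "hnorm ip (A \<zeta>) \<le> sqrt (M * N)" if z: "hnorm ip \<zeta> \<le> 1" for \<zeta>
  proof -
    define w where "w = A \<zeta>"
    define h where "h = hnorm ip w"
    have h0: "0 \<le> h" using hnorm_nonneg h_def by simp
    have "h^2 = Re (ip w w)" using hnorm_sq h_def by simp
    also have "\<dots> \<le> cmod (ip (A \<zeta>) w)" using w_def complex_Re_le_cmod by simp
    finally have h1: "h^2 \<le> cmod (ip (A \<zeta>) w)" .
    have c1: "(cmod (ip (A \<zeta>) w))^2 \<le> Re (ip (A \<zeta>) \<zeta>) * Re (ip (A w) w)"
      by (rule P.cs)
    have "Re (ip (A w) w) \<le> cmod (ip (A w) w)" by (rule complex_Re_le_cmod)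
    also have "\<dots> \<le> hnorm ip (A w) * h" using ip_cs h_def by simp
    also have "\<dots> \<le> N * h * h" using op_bound[OF A(1)] h0 N_def h_def
      by (simp add: mult_right_mono)
    finally have c2: "Re (ip (A w) w) \<le> N * h * h" .
    have c3: "Re (ip (A \<zeta>) \<zeta>) * Re (ip (A w) w) \<le> M * (N * h * h)"
      using M[OF z] c2 A(4)[of \<zeta>] A(4)[of w] M0 by (simp add: mult_mono)
    have "(h^2)^2 \<le> (cmod (ip (A \<zeta>) w))^2" using h1 h0 by (intro power_mono) auto
    also have "\<dots> \<le> M * N * h^2" using c1 c3 by (simp add: power2_eq_square mult.assoc)
    finally have c4: "h^2 * h^2 \<le> (M * N) * h^2" by (simp add: power2_eq_square)
    have "h^2 \<le> M * N"
    proof (cases "h = 0")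
      case True then show ?thesis using M0 N0 by simp
    next
      case False then have "h^2 > 0" using h0 by simp
      then show ?thesis using mult_right_le_imp_le[OF c4] by blast
    qed
    then have "sqrt (h^2) \<le> sqrt (M * N)" by (rule real_sqrt_le_mono)
    then show ?thesis using h0 h_def w_def by simp
  qed
  have "N \<le> sqrt (M * N)" using op_least[of A "sqrt (M * N)", OF key] N_def by simp
  then have "N^2 \<le> M * N" using N0
    by (metis M0 mult_nonneg_nonneg power_mono real_sqrt_pow2)
  then show ?thesis
  proof (cases "N = 0")
    case True then show ?thesis using M0 N_def by simp
  next
    case False then have "N > 0" using N0 by simp
    then show ?thesis using \<open>N^2 \<le> M * N\<close> N_def by (simp add: power2_eq_square)
  qed
qed

end

locale hkm =
  fixes sm :: "complex \<Rightarrow> 'h::ab_group_add \<Rightarrow> 'h" and ip :: "'h \<Rightarrow> 'h \<Rightarrow> complex"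
    and esm :: "complex \<Rightarrow> 'e::ab_group_add \<Rightarrow> 'e" and act :: "('h \<Rightarrow> 'h) \<Rightarrow> 'e \<Rightarrow> 'e"
    and ein :: "'e \<Rightarrow> 'e \<Rightarrow> 'h \<Rightarrow> 'h"
  assumes hkm: "hilbert_K_module sm ip esm act ein"

sublocale hkm \<subseteq> hs sm ip
  using hkm unfolding hilbert_K_module_def by unfold_locales blast

context hkm
begin

lemmas hkmd = hkm[unfolded hilbert_K_module_def]
lemma esm_assoc: "esm a (esm b v) = esm (a * b) v"
  using hkmd[THEN conjunct2, THEN conjunct1] by blast
lemma esm_one: "esm 1 v = v"
  using hkmd[THEN conjunct2, THEN conjunct2, THEN conjunct1] by blast
lemma esm_add2: "esm (a + b) v = esm a v + esm b v"
  using hkmd[THEN conjunct2, THEN conjunct2, THEN conjunct2, THEN conjunct2, THEN conjunct1] by blast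
lemma ein_compact: "compact_op sm ip (ein a b)"
  using hkmd[THEN conjunct2, THEN conjunct2, THEN conjunct2, THEN conjunct2, THEN conjunct2, THEN conjunct2, THEN conjunct2, THEN conjunct2, THEN conjunct2, THEN conjunct2, THEN conjunct1] by blast
lemma ein_add: "ein (a + b) c = (\<lambda>\<xi>. ein a c \<xi> + ein b c \<xi>)"
  using hkmd[THEN conjunct2, THEN conjunct2, THEN conjunct2, THEN conjunct2, THEN conjunct2, THEN conjunct2, THEN conjunct2, THEN conjunct2, THEN conjunct2, THEN conjunct2, THEN conjunct2, THEN conjunct1] by blast
lemma ein_esm: "ein (esm c a) b = (\<lambda>\<xi>. sm c (ein a b \<xi>))"
  using hkmd[THEN conjunct2, THEN conjunct2, THEN conjunct2, THEN conjunct2, THEN conjunct2, THEN conjunct2, THEN conjunct2, THEN conjunct2, THEN conjunct2, THEN conjunct2, THEN conjunct2, THEN conjunct2, THEN conjunct1] by blast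
lemma ein_act: "compact_op sm ip A \<Longrightarrow> ein (act A a) b = A \<circ> ein a b"
  using hkmd[THEN conjunct2, THEN conjunct2, THEN conjunct2, THEN conjunct2, THEN conjunct2, THEN conjunct2, THEN conjunct2, THEN conjunct2, THEN conjunct2, THEN conjunct2, THEN conjunct2, THEN conjunct2, THEN conjunct2, THEN conjunct1] by blast
lemma ein_adj: "ip (ein a b \<xi>) \<eta> = ip \<xi> (ein b a \<eta>)"
  using hkmd[THEN conjunct2, THEN conjunct2, THEN conjunct2, THEN conjunct2, THEN conjunct2, THEN conjunct2, THEN conjunct2, THEN conjunct2, THEN conjunct2, THEN conjunct2, THEN conjunct2, THEN conjunct2, THEN conjunct2, THEN conjunct2, THEN conjunct1] by blast
lemma ein_zero: "ein a a = (\<lambda>_. 0) \<longleftrightarrow> a = 0"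
  using hkmd[THEN conjunct2, THEN conjunct2, THEN conjunct2, THEN conjunct2, THEN conjunct2, THEN conjunct2, THEN conjunct2, THEN conjunct2, THEN conjunct2, THEN conjunct2, THEN conjunct2, THEN conjunct2, THEN conjunct2, THEN conjunct2, THEN conjunct2, THEN conjunct2, THEN conjunct1] by blast
lemma ein_pos_im: "Im (ip (ein a a \<xi>) \<xi>) = 0"
  using hkmd[THEN conjunct2, THEN conjunct2, THEN conjunct2, THEN conjunct2, THEN conjunct2, THEN conjunct2, THEN conjunct2, THEN conjunct2, THEN conjunct2, THEN conjunct2, THEN conjunct2, THEN conjunct2, THEN conjunct2, THEN conjunct2, THEN conjunct2, THEN conjunct1] by blast
lemma ein_pos_re: "0 \<le> Re (ip (ein a a \<xi>) \<xi>)"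
  using hkmd[THEN conjunct2, THEN conjunct2, THEN conjunct2, THEN conjunct2, THEN conjunct2, THEN conjunct2, THEN conjunct2, THEN conjunct2, THEN conjunct2, THEN conjunct2, THEN conjunct2, THEN conjunct2, THEN conjunct2, THEN conjunct2, THEN conjunct2, THEN conjunct1] by blast

lemma esm_zero: "esm 0 v = 0"
  using esm_add2[of 0 0 v] by simp

lemma esm_m1: "esm (-1) v = - v"
  using esm_add2[of "-1" 1 v] by (simp add: esm_zero esm_one eq_neg_iff_add_eq_0)

lemma ein_bop: "bounded_op sm ip (ein a b)"
  using ein_compact unfolding compact_op_def by blast

lemma st_sesq: "sesq esm (\<lambda>a b. ip (ein a b \<zeta>) \<zeta>)"
proof
  fix u v w :: 'e and c :: complex
  show "ip (ein (u + v) w \<zeta>) \<zeta> = ip (ein u w \<zeta>) \<zeta> + ip (ein v w \<zeta>) \<zeta>"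
    by (simp add: ein_add H.add1)
  show "ip (ein (esm c u) w \<zeta>) \<zeta> = c * ip (ein u w \<zeta>) \<zeta>"
    by (simp add: ein_esm H.smul1)
  show "ip (ein v u \<zeta>) \<zeta> = cnj (ip (ein u v \<zeta>) \<zeta>)"
    by (metis ein_adj H.herm)
  show "Im (ip (ein u u \<zeta>) \<zeta>) = 0" by (rule ein_pos_im)
  show "0 \<le> Re (ip (ein u u \<zeta>) \<zeta>)" by (rule ein_pos_re)
qed

lemma st_expand: "Re (ip (ein (u + esm t v) (u + esm t v) \<zeta>) \<zeta>) =
   Re (ip (ein u u \<zeta>) \<zeta>) + 2 * Re (cnj t * ip (ein u v \<zeta>) \<zeta>) + (cmod t)^2 * Re (ip (ein v v \<zeta>) \<zeta>)"
proof -
  interpret S: sesq esm "\<lambda>a b. ip (ein a b \<zeta>) \<zeta>" by (rule st_sesq)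
  show ?thesis by (rule S.expand_re)
qed

lemma st_cs: "(cmod (ip (ein u v \<zeta>) \<zeta>))^2 \<le> Re (ip (ein u u \<zeta>) \<zeta>) * Re (ip (ein v v \<zeta>) \<zeta>)"
proof -
  interpret S: sesq esm "\<lambda>a b. ip (ein a b \<zeta>) \<zeta>" by (rule st_sesq)
  show ?thesis by (rule S.cs)
qed

lemma enorm_nonneg: "0 \<le> enorm ip ein z"
  using op_nonneg[OF ein_bop, of z z] by (simp add: enorm_def)

lemma enorm_sq: "(enorm ip ein z)^2 = op_norm ip (ein z z)"
  using op_nonneg[OF ein_bop, of z z] by (simp add: enorm_def)

lemma quad_le: "hnorm ip \<zeta> \<le> 1 \<Longrightarrow> Re (ip (ein z z \<zeta>) \<zeta>) \<le> (enorm ip ein z)^2"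
  using op_quad[OF ein_bop] enorm_sq by simp

lemma enorm_le: assumes "\<And>\<zeta>. hnorm ip \<zeta> \<le> 1 \<Longrightarrow> Re (ip (ein z z \<zeta>) \<zeta>) \<le> M^2" "0 \<le> M"
  shows "enorm ip ein z \<le> M"
proof -
  have "op_norm ip (ein z z) \<le> M^2"
    by (rule op_norm_quad[OF ein_bop ein_adj ein_pos_im ein_pos_re assms(1)])
  then have "(enorm ip ein z)^2 \<le> M^2" using enorm_sq by simp
  then show ?thesis using assms(2) enorm_nonneg power2_le_imp_le by blast
qed

lemma enorm_ge: assumes "hnorm ip \<zeta> \<le> 1" "M^2 \<le> Re (ip (ein z z \<zeta>) \<zeta>)" "0 \<le> M"
  shows "M \<le> enorm ip ein z"
proof -
  have "M^2 \<le> (enorm ip ein z)^2" using quad_le[OF assms(1), of z] assms(2) by linarith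
  then show ?thesis using enorm_nonneg power2_le_imp_le by blast
qed

end

locale mpx = hkm +
  fixes x :: "'e::ab_group_add"
  assumes mp: "minimal_projection sm ip (ein x x)"
begin

abbreviation "P \<equiv> ein x x"

lemma P_idem: "P (P u) = P u"
  using mp unfolding minimal_projection_def by (metis comp_apply)

lemma P_sa: "ip (P u) v = ip u (P v)"
  using mp unfolding minimal_projection_def by blast

lemma P_bop: "bounded_op sm ip P" by (rule ein_bop)

lemma P_min: "bounded_op sm ip R \<Longrightarrow> \<exists>c. P \<circ> R \<circ> P = (\<lambda>u. sm c (P u))"
  using mp unfolding minimal_projection_def by blast

definition x0 where "x0 = (SOME u. P u \<noteq> 0)"

lemma x0: "P x0 \<noteq> 0"
  using mp unfolding minimal_projection_def x0_def by (metis (mono_tags) someI_ex)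

definition xi where "xi = sm (complex_of_real (1 / hnorm ip (P x0))) (P x0)"

lemma hP0: "hnorm ip (P x0) > 0"
  using x0 hnorm_zero hnorm_nonneg by (metis less_eq_real_def)

lemma xi_norm: "hnorm ip xi = 1"
  using hP0 by (simp add: xi_def hnorm_sm norm_divide)

lemma xi_ip: "ip xi xi = 1"
  using ip_self[of xi] xi_norm by simp

lemma P_xi: "P xi = xi"
  by (simp add: xi_def bop_sm[OF P_bop] P_idem)

lemma P_form: "P z = sm (ip z xi) xi"
proof -
  define R where "R = (\<lambda>\<psi>. sm (ip \<psi> xi) z)"
  have "bounded_op sm ip R"
    unfolding bounded_op_def
  proof (intro conjI allI exI)
    fix u v show "R (u + v) = R u + R v" by (simp add: R_def H.add1 sm_add2)
  next
    fix a u show "R (sm a u) = sm a (R u)" by (simp add: R_def H.smul1 sm_assoc)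
  next
    fix u
    have "hnorm ip (R u) = cmod (ip u xi) * hnorm ip z" by (simp add: R_def hnorm_sm)
    also have "\<dots> \<le> hnorm ip u * hnorm ip z"
      using ip_cs[of u xi] xi_norm hnorm_nonneg[of z] by (simp add: mult_right_mono)
    finally show "hnorm ip (R u) \<le> hnorm ip z * hnorm ip u" by (simp add: mult.commute)
  qed
  then obtain c where c: "P \<circ> R \<circ> P = (\<lambda>u. sm c (P u))" using P_min by blast
  have "P (R (P xi)) = sm c (P xi)" using fun_cong[OF c, of xi] by simp
  then have Pz: "P z = sm c xi" by (simp add: P_xi R_def xi_ip sm_one)
  have "ip (P z) xi = c" by (simp add: Pz H.smul1 xi_ip)
  moreover have "ip (P z) xi = ip z xi" by (simp add: P_sa P_xi)
  ultimately show ?thesis using Pz by simp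
qed

lemma P_quad: "ip (P z) z = complex_of_real ((cmod (ip z xi))^2)"
  using complex_norm_square[of "ip xi z"] by (simp add: P_form H.smul1 H.herm[of xi z] mult.commute)

lemma P_opnorm: "op_norm ip P = 1"
proof (rule antisym)
  show "op_norm ip P \<le> 1"
  proof (rule op_least)
    fix u assume "hnorm ip u \<le> 1"
    then show "hnorm ip (P u) \<le> 1"
      using ip_cs[of u xi] xi_norm by (simp add: P_form hnorm_sm)
  qed
  show "1 \<le> op_norm ip P"
    using op_le[OF P_bop, of xi] xi_norm P_xi by simp
qed

lemma enorm_x: "enorm ip ein x = 1"
  using P_opnorm by (simp add: enorm_def)

lemma act_fix: "act P x = x"
proof -
  have cP: "compact_op sm ip P" by (rule ein_compact)
  define w where "w = x + esm (-1) (act P x)"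
  have e1: "ein (act P x) x u = P u" for u by (simp add: ein_act[OF cP] P_idem)
  have e2: "ip (ein x (act P x) \<zeta>) \<zeta> = ip \<zeta> (P \<zeta>)" for \<zeta>
    using ein_adj[of x "act P x" \<zeta> \<zeta>] e1 by simp
  have e3: "ip (ein (act P x) (act P x) \<zeta>) \<zeta> = ip \<zeta> (P \<zeta>)" for \<zeta>
  proof -
    have "ip (ein (act P x) (act P x) \<zeta>) \<zeta> = ip (P (ein x (act P x) \<zeta>)) \<zeta>"
      by (simp add: ein_act[OF cP])
    also have "\<dots> = ip (ein x (act P x) \<zeta>) (P \<zeta>)" by (rule P_sa)
    also have "\<dots> = ip \<zeta> (ein (act P x) x (P \<zeta>))" by (rule ein_adj)
    also have "\<dots> = ip \<zeta> (P \<zeta>)" by (simp add: e1 P_idem)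
    finally show ?thesis .
  qed
  have "Re (ip (ein w w \<zeta>) \<zeta>) = 0" for \<zeta>
    unfolding w_def st_expand using e2[of \<zeta>] e3[of \<zeta>] P_sa[of \<zeta> \<zeta>] by simp
  then have "ein w w \<zeta> = 0" for \<zeta>
    by (intro pos_zero[OF ein_bop ein_adj ein_pos_im ein_pos_re])
  then have "ein w w = (\<lambda>_. 0)" by auto
  then have "w = 0" using ein_zero by blast
  then show ?thesis by (simp add: w_def esm_m1)
qed

lemma PT: "P (ein x y u) = ein x y u"
  by (metis act_fix ein_act[OF ein_compact] comp_apply)

lemma st_T: "ip (ein x y \<zeta>) \<zeta> = cnj (ip \<zeta> xi) * ip (ein x y \<zeta>) xi"
proof -
  have "ip (ein x y \<zeta>) \<zeta> = ip (P (ein x y \<zeta>)) \<zeta>" by (simp add: PT)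
  also have "\<dots> = ip (ein x y \<zeta>) (P \<zeta>)" by (rule P_sa)
  also have "\<dots> = cnj (ip \<zeta> xi) * ip (ein x y \<zeta>) xi" by (simp add: P_form H.smul2)
  finally show ?thesis .
qed

lemma qx_le: "hnorm ip \<zeta> \<le> 1 \<Longrightarrow> Re (ip (P \<zeta>) \<zeta>) \<le> 1"
  using quad_le[of \<zeta> x] enorm_x by simp

lemma beta_le: assumes "hnorm ip \<zeta> \<le> 1"
  shows "cmod (ip (ein x y \<zeta>) \<zeta>) \<le> enorm ip ein y"
proof -
  have "(cmod (ip (ein x y \<zeta>) \<zeta>))^2 \<le> Re (ip (P \<zeta>) \<zeta>) * Re (ip (ein y y \<zeta>) \<zeta>)"
    by (rule st_cs)
  also have "\<dots> \<le> 1 * (enorm ip ein y)^2"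
    using qx_le[OF assms] quad_le[OF assms, of y] ein_pos_re[of x \<zeta>] ein_pos_re[of y \<zeta>]
    by (intro mult_mono) auto
  finally show ?thesis using enorm_nonneg power2_le_imp_le by simp
qed

lemma upper: assumes "cmod l = 1"
  shows "enorm ip ein (x + esm l y) \<le> 1 + enorm ip ein y"
proof (rule enorm_le)
  fix \<zeta> assume z: "hnorm ip \<zeta> \<le> 1"
  have "Re (cnj l * ip (ein x y \<zeta>) \<zeta>) \<le> cmod (cnj l * ip (ein x y \<zeta>) \<zeta>)"
    by (rule complex_Re_le_cmod)
  also have "\<dots> \<le> enorm ip ein y" using beta_le[OF z] assms by (simp add: norm_mult)
  finally have b: "Re (cnj l * ip (ein x y \<zeta>) \<zeta>) \<le> enorm ip ein y" .
  show "Re (ip (ein (x + esm l y) (x + esm l y) \<zeta>) \<zeta>) \<le> (1 + enorm ip ein y)^2"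
    unfolding st_expand using assms b qx_le[OF z] quad_le[OF z, of y]
    by (simp add: power2_eq_square algebra_simps)
next
  show "0 \<le> 1 + enorm ip ein y" using enorm_nonneg[of y] by simp
qed

lemma bwd: assumes z1: "hnorm ip \<zeta> = 1" and eq: "cmod (ip (ein x y \<zeta>) \<zeta>) = enorm ip ein y"
  shows "norm_parallel ip esm ein x y"
proof -
  define s where "s = enorm ip ein y"
  have s0: "0 \<le> s" using enorm_nonneg s_def by simp
  show ?thesis
  proof (cases "s = 0")
    case True
    have "cmod (ip (ein x y xi) xi) \<le> 0" using beta_le[of xi y] xi_norm True s_def by simp
    then have b0: "ip (ein x y xi) xi = 0" by simp
    have "(1::real)^2 \<le> Re (ip (ein (x + esm 1 y) (x + esm 1 y) xi) xi)"
      unfolding st_expand using b0 P_xi xi_ip ein_pos_re[of y xi] by simp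
    then have "1 \<le> enorm ip ein (x + esm 1 y)" using xi_norm by (intro enorm_ge) auto
    moreover have "enorm ip ein (x + esm 1 y) \<le> 1" using upper[of 1 y] True s_def by simp
    ultimately have "enorm ip ein (x + esm 1 y) = enorm ip ein x + enorm ip ein y"
      using True s_def enorm_x by simp
    then show ?thesis unfolding norm_parallel_def by (intro exI[of _ 1]) simp
  next
    case False
    then have sp: "s > 0" using s0 by simp
    define \<beta> where "\<beta> = ip (ein x y \<zeta>) \<zeta>"
    define l where "l = \<beta> / complex_of_real s"
    have cb: "cmod \<beta> = s" using eq \<beta>_def s_def by simp
    have l1: "cmod l = 1" using cb sp by (simp add: l_def norm_divide)
    have lb: "cnj l * \<beta> = complex_of_real s"
    proof -
      have "cnj l * \<beta> = (cnj \<beta> * \<beta>) / complex_of_real s" by (simp add: l_def)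
      also have "cnj \<beta> * \<beta> = complex_of_real (s^2)"
        using complex_norm_square[of \<beta>] cb by (simp add: mult.commute)
      finally show ?thesis using sp by (simp add: power2_eq_square)
    qed
    define qx where "qx = Re (ip (P \<zeta>) \<zeta>)"
    define qy where "qy = Re (ip (ein y y \<zeta>) \<zeta>)"
    have z: "hnorm ip \<zeta> \<le> 1" using z1 by simp
    have qx1: "qx \<le> 1" using qx_le[OF z] qx_def by simp
    have qy1: "qy \<le> s^2" using quad_le[OF z, of y] qy_def s_def by simp
    have qx0: "0 \<le> qx" using ein_pos_re qx_def by simp
    have qy0: "0 \<le> qy" using ein_pos_re qy_def by simp
    have cs: "s^2 \<le> qx * qy" using st_cs[of x y \<zeta>] cb \<beta>_def qx_def qy_def by simp
    have "qx * qy \<le> 1 * qy" using qx1 qy0 by (intro mult_right_mono) auto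
    then have qy2: "qy = s^2" using cs qy1 by simp
    have "s^2 * 1 \<le> s^2 * qx" using cs qy2 by (simp add: mult.commute)
    then have qx2: "1 \<le> qx" using sp by (simp add: mult_le_cancel_left)
    have "(1 + s)^2 \<le> Re (ip (ein (x + esm l y) (x + esm l y) \<zeta>) \<zeta>)"
      unfolding st_expand using lb l1 qx2 qy2 qx_def qy_def \<beta>_def
      by (simp add: power2_eq_square algebra_simps)
    then have "1 + s \<le> enorm ip ein (x + esm l y)" using z s0 by (intro enorm_ge) auto
    moreover have "enorm ip ein (x + esm l y) \<le> 1 + s" using upper[OF l1, of y] s_def by simp
    ultimately have "enorm ip ein (x + esm l y) = enorm ip ein x + enorm ip ein y"
      using s_def enorm_x by simp
    then show ?thesis unfolding norm_parallel_def using l1 by blast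
  qed
qed

lemma fwd: assumes np: "norm_parallel ip esm ein x y"
  shows "cmod (ip (ein x y xi) xi) = enorm ip ein y"
proof -
  obtain l where l1: "cmod l = 1" and eqz: "enorm ip ein (x + esm l y) = enorm ip ein x + enorm ip ein y"
    using np unfolding norm_parallel_def by blast
  define s where "s = enorm ip ein y"
  define z where "z = x + esm l y"
  define T where "T = ein x y"
  define k where "k = cmod (ip (T xi) xi)"
  have s0: "0 \<le> s" using enorm_nonneg s_def by simp
  have ez: "enorm ip ein z = 1 + s" using eqz enorm_x s_def z_def by simp
  have kle: "k \<le> s" using beta_le[of xi y] xi_norm k_def s_def T_def by simp
  have TB: "bounded_op sm ip T" using ein_bop T_def by simp
  show ?thesis
  proof (rule ccontr)
    assume "cmod (ip (ein x y xi) xi) \<noteq> enorm ip ein y"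
    then have ks: "k < s" using kle k_def s_def T_def by simp
    define M where "M = op_norm ip T"
    have M0: "0 \<le> M" using op_nonneg[OF TB] M_def by simp
    define d where "d = s - k"
    have d0: "d > 0" using ks d_def by simp
    define \<rho> where "\<rho> = min 1 (d / (2 * M + 2))"
    have \<rho>0: "\<rho> > 0" using d0 M0 by (simp add: \<rho>_def)
    have \<rho>1: "\<rho> \<le> 1" by (simp add: \<rho>_def)
    have \<rho>2: "\<rho> * (2 * M + 2) \<le> d"
    proof -
      have "\<rho> \<le> d / (2 * M + 2)" by (simp add: \<rho>_def)
      then show ?thesis using M0 by (simp add: field_simps)
    qed
    define \<epsilon> where "\<epsilon> = \<rho>^2"
    have \<epsilon>0: "\<epsilon> > 0" using \<rho>0 \<epsilon>_def by simp
    have "\<not> (\<forall>\<zeta>. hnorm ip \<zeta> \<le> 1 \<longrightarrow> Re (ip (ein z z \<zeta>) \<zeta>) \<le> (1 + s)^2 - \<epsilon>)"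
    proof
      assume H: "\<forall>\<zeta>. hnorm ip \<zeta> \<le> 1 \<longrightarrow> Re (ip (ein z z \<zeta>) \<zeta>) \<le> (1 + s)^2 - \<epsilon>"
      have "op_norm ip (ein z z) \<le> (1 + s)^2 - \<epsilon>"
        using H by (intro op_norm_quad[OF ein_bop ein_adj ein_pos_im ein_pos_re]) auto
      moreover have "op_norm ip (ein z z) = (1 + s)^2" using enorm_sq[of z] ez by simp
      ultimately show False using \<epsilon>0 by simp
    qed
    then obtain \<zeta> where z1: "hnorm ip \<zeta> \<le> 1" and big: "(1 + s)^2 - \<epsilon> < Re (ip (ein z z \<zeta>) \<zeta>)"
      by force
    define c where "c = ip \<zeta> xi"
    define a where "a = (cmod c)^2"
    define \<beta> where "\<beta> = ip (T \<zeta>) \<zeta>"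
    define t where "t = cmod \<beta>"
    have qx: "Re (ip (P \<zeta>) \<zeta>) = a" using P_quad a_def c_def by simp
    have qy1: "Re (ip (ein y y \<zeta>) \<zeta>) \<le> s^2" using quad_le[OF z1, of y] s_def by simp
    have c1: "cmod c \<le> 1" using ip_cs[of \<zeta> xi] xi_norm z1 c_def by simp
    have c0: "0 \<le> cmod c" by simp
    have a1: "a \<le> 1" using c1 c0 a_def by (simp add: power_le_one)
    have ts: "t \<le> s" using beta_le[OF z1, of y] t_def \<beta>_def T_def s_def by simp
    have "Re (cnj l * \<beta>) \<le> cmod (cnj l * \<beta>)" by (rule complex_Re_le_cmod)
    also have "\<dots> = t" using l1 t_def by (simp add: norm_mult)
    finally have rt: "Re (cnj l * \<beta>) \<le> t" .
    have "Re (ip (ein z z \<zeta>) \<zeta>) = a + 2 * Re (cnj l * \<beta>) + Re (ip (ein y y \<zeta>) \<zeta>)"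
      unfolding z_def st_expand using qx l1 \<beta>_def T_def by simp
    then have "(1 + s)^2 - \<epsilon> < a + 2 * t + s^2" using big rt qy1 by linarith
    then have ineq: "1 + 2 * s - \<epsilon> < a + 2 * t" by (simp add: power2_eq_square algebra_simps)
    have tbig: "s - \<epsilon> / 2 < t" using ineq a1 by linarith
    have abig: "1 - \<epsilon> < a" using ineq ts by linarith
    define r where "r = \<zeta> + sm (- c) xi"
    have "(hnorm ip r)^2 = Re (ip \<zeta> \<zeta>) + 2 * Re (cnj (- c) * ip \<zeta> xi) + (cmod (- c))^2 * Re (ip xi xi)"
      unfolding r_def hnorm_sq by (rule H.expand_re)
    also have "cnj (- c) * ip \<zeta> xi = - complex_of_real a"
      using complex_norm_square[of c] by (simp add: a_def c_def mult.commute)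
    also have "Re (ip \<zeta> \<zeta>) = (hnorm ip \<zeta>)^2" by (simp add: hnorm_sq)
    finally have "(hnorm ip r)^2 = (hnorm ip \<zeta>)^2 - a" using xi_ip a_def by simp
    also have "\<dots> \<le> 1 - a" using z1 hnorm_nonneg[of \<zeta>] by (simp add: power_le_one)
    also have "\<dots> < \<rho>^2" using abig \<epsilon>_def by simp
    finally have "(hnorm ip r)^2 < \<rho>^2" .
    then have rr: "hnorm ip r < \<rho>" using \<rho>0 by (simp add: power_less_imp_less_base)
    have zr: "\<zeta> = r + sm c xi"
      using sm_neg_cancel[of c xi] by (simp add: r_def add.assoc)
    have Tz: "T \<zeta> = T r + sm c (T xi)" by (simp add: zr bop_add[OF TB] bop_sm[OF TB])
    have ipTz: "ip (T \<zeta>) xi = ip (T r) xi + c * ip (T xi) xi"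
      by (simp add: Tz H.add1 H.smul1)
    have bT: "\<beta> = cnj c * ip (T \<zeta>) xi" using st_T[of y \<zeta>] \<beta>_def T_def c_def by simp
    have "cmod (ip (T r) xi) \<le> hnorm ip (T r) * hnorm ip xi" by (rule ip_cs)
    also have "\<dots> \<le> M * hnorm ip r" using op_bound[OF TB, of r] xi_norm M_def by simp
    also have "\<dots> \<le> M * \<rho>" using rr M0 by (simp add: mult_left_mono)
    finally have Tr: "cmod (ip (T r) xi) \<le> M * \<rho>" .
    have "cmod (ip (T \<zeta>) xi) \<le> cmod (ip (T r) xi) + cmod c * k"
      using norm_triangle_ineq[of "ip (T r) xi" "c * ip (T xi) xi"] ipTz k_def
      by (simp add: norm_mult)
    also have "\<dots> \<le> M * \<rho> + k" using Tr c1 k_def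
      by (smt (verit) mult_left_le_one_le norm_ge_zero)
    finally have Tz2: "cmod (ip (T \<zeta>) xi) \<le> M * \<rho> + k" .
    have "t = cmod c * cmod (ip (T \<zeta>) xi)" using bT t_def by (simp add: norm_mult)
    also have "\<dots> \<le> cmod (ip (T \<zeta>) xi)" using c1 by (simp add: mult_left_le_one_le)
    finally have "t \<le> M * \<rho> + k" using Tz2 by simp
    then have "s - \<rho>^2 / 2 < M * \<rho> + k" using tbig \<epsilon>_def by simp
    moreover have "\<rho>^2 \<le> \<rho>" using \<rho>0 \<rho>1 by (simp add: power2_eq_square mult_left_le_one_le)
    moreover have "0 \<le> M * \<rho>" using M0 \<rho>0 by simp
    moreover have "\<rho> * (2 * M + 2) = 2 * (M * \<rho>) + 2 * \<rho>" by (simp add: algebra_simps)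
    ultimately show False using \<rho>2 \<rho>0 d_def by linarith
  qed
qed

end

theorem theorem2p4:
  fixes sm :: "complex \<Rightarrow> 'h::ab_group_add \<Rightarrow> 'h" and ip :: "'h \<Rightarrow> 'h \<Rightarrow> complex"
    and esm :: "complex \<Rightarrow> 'e::ab_group_add \<Rightarrow> 'e" and act :: "('h \<Rightarrow> 'h) \<Rightarrow> 'e \<Rightarrow> 'e"
    and ein :: "'e \<Rightarrow> 'e \<Rightarrow> 'h \<Rightarrow> 'h" and x y :: 'e
  assumes "hilbert_K_module sm ip esm act ein"
    and "minimal_projection sm ip (ein x x)"
  shows "norm_parallel ip esm ein x y \<longleftrightarrow>
    (\<exists>\<xi>. hnorm ip \<xi> = 1 \<and> cmod (ip (ein x y \<xi>) \<xi>) = enorm ip ein y)"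
proof -
  interpret mpx sm ip esm act ein x
    using assms by (simp add: mpx_def mpx_axioms_def hkm_def)
  show ?thesis
  proof
    assume "norm_parallel ip esm ein x y"
    then show "\<exists>\<xi>. hnorm ip \<xi> = 1 \<and> cmod (ip (ein x y \<xi>) \<xi>) = enorm ip ein y"
      using fwd xi_norm by blast
  next
    assume "\<exists>\<xi>. hnorm ip \<xi> = 1 \<and> cmod (ip (ein x y \<xi>) \<xi>) = enorm ip ein y"
    then show "norm_parallel ip esm ein x y" using bwd by blast
  qed
qed

end
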